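(* Let $G, H$ be finite groups, and consider the bijective Version I pebble game on $(G,H)$. Suppose that at some round Duplicator selects a bijection $f : G \to H$ such that $|C_{G}(x)| \neq |C_{H}(f(x))|$ for some $x \in G$. Then Spoiler can win using $3$ pebble pairs within $3$ rounds.
   Context: $C_G(x)$ denotes the centralizer of $x$ in $G$. Bijective Version I pebble game on finite groups $G,H$: if $|G|\ne|H|$ Spoiler wins at once. Each round: Spoiler picks up a pebble pair $(p_i,p_i')$; the winning condition is checked; Duplicator chooses a bijection $f:G\to H$; Spoiler places $p_i$ on some $g\in G$ and $p_i'$ is placed on $f(g)$. Spoiler wins when, with $g_1,\ldots,g_\ell\in G$ and $h_1,\ldots,h_\ell \in H$ the corresponding pebbled elements, the map $g_i\mapsto h_i$ is not a marked equivalence, i.e. it is not the case that for all $i,j,t$: $g_i=g_j\iff h_i=h_j$ and $g_ig_j=g_t\iff h_ih_j=h_t$. *)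

theory Defs
  imports "HOL-Algebra.Group"
begin

definition centralizer :: "('a, 'm) monoid_scheme \<Rightarrow> 'a \<Rightarrow> 'a set" where
  "centralizer G x = {y \<in> carrier G. x \<otimes>\<^bsub>G\<^esub> y = y \<otimes>\<^bsub>G\<^esub> x}"

text \<open>A pebble configuration: pebble pair number i is either off the board (None)
  or placed on (g_i, h_i) (Some (g_i, h_i)).\<close>
type_synonym ('a, 'b) config = "nat \<Rightarrow> ('a \<times> 'b) option"

definition marked_equiv ::
  "('a, 'm) monoid_scheme \<Rightarrow> ('b, 'n) monoid_scheme \<Rightarrow> ('a, 'b) config \<Rightarrow> bool" where
  "marked_equiv G H c \<longleftrightarrow>
     (\<forall>i j t gi hi gj hj gt ht. c i = Some (gi, hi) \<longrightarrow> c j = Some (gj, hj) \<longrightarrow>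
        c t = Some (gt, ht) \<longrightarrow>
        ((gi = gj \<longleftrightarrow> hi = hj) \<and>
         (gi \<otimes>\<^bsub>G\<^esub> gj = gt \<longleftrightarrow> hi \<otimes>\<^bsub>H\<^esub> hj = ht)))"

text \<open>A round: Spoiler picks up pebble pair i < k; the winning condition is checked;
  Duplicator chooses a bijection f; Spoiler places p_i on some g and p_i' on f g.\<close>
fun spoiler_wins ::
  "('a, 'm) monoid_scheme \<Rightarrow> ('b, 'n) monoid_scheme \<Rightarrow> nat \<Rightarrow> nat \<Rightarrow> ('a, 'b) config \<Rightarrow> bool" where
  "spoiler_wins G H k 0 c \<longleftrightarrow> \<not> marked_equiv G H c"
| "spoiler_wins G H k (Suc r) c \<longleftrightarrow>
     \<not> marked_equiv G H c \<or>
     (\<exists>i<k. \<not> marked_equiv G H (c(i := None)) \<or>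
        (\<forall>f. bij_betw f (carrier G) (carrier H) \<longrightarrow>
           (\<exists>g\<in>carrier G. spoiler_wins G H k r (c(i := Some (g, f g))))))"

end

theory Submission
  imports Defs
begin

lemma card_cent_eq:
  assumes "bij_betw f' (carrier G) (carrier H)"
    and "\<forall>g\<in>carrier G. (g \<in> centralizer G x \<longleftrightarrow> f' g \<in> centralizer H y)"
  shows "card (centralizer G x) = card (centralizer H y)"
proof -
  have "f' ` centralizer G x = centralizer H y"
  proof
    show "f' ` centralizer G x \<subseteq> centralizer H y"
      using assms unfolding centralizer_def by auto
    show "centralizer H y \<subseteq> f' ` centralizer G x"
    proof
      fix h assume h: "h \<in> centralizer H y"
      then have "h \<in> carrier H" unfolding centralizer_def by auto
      then obtain g where g: "g \<in> carrier G" "h = f' g"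
        using assms(1) unfolding bij_betw_def by auto
      then have "g \<in> centralizer G x" using assms(2) h by auto
      then show "h \<in> f' ` centralizer G x" using g by auto
    qed
  qed
  moreover have "inj_on f' (centralizer G x)"
    using assms(1) unfolding bij_betw_def centralizer_def by (auto intro: inj_on_subset)
  ultimately show ?thesis using card_image[of f' "centralizer G x"] by simp
qed

lemma me_D:
  assumes "marked_equiv G H d" "d a = Some (ga, ha)" "d b = Some (gb, hb)" "d t = Some (gt, ht)"
  shows "(ga \<otimes>\<^bsub>G\<^esub> gb = gt) \<longleftrightarrow> (ha \<otimes>\<^bsub>H\<^esub> hb = ht)"
  using assms unfolding marked_equiv_def by blast

lemma not_me:
  assumes "g \<in> carrier G" "fg \<in> carrier H" "i \<noteq> j" "i \<noteq> j'" "j \<noteq> j'"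
    and "\<not> (g \<in> centralizer G x \<longleftrightarrow> fg \<in> centralizer H y)"
  shows "\<not> marked_equiv G H (c(i:=Some(x,y), j:=Some(g,fg), j':=Some(x \<otimes>\<^bsub>G\<^esub> g, z)))"
    (is "\<not> marked_equiv G H ?d")
proof
  assume me: "marked_equiv G H ?d"
  have e1: "?d i = Some (x, y)" using assms(3-5) by simp
  have e2: "?d j = Some (g, fg)" using assms(3-5) by simp
  have e3: "?d j' = Some (x \<otimes>\<^bsub>G\<^esub> g, z)" by simp
  have 1: "(x \<otimes>\<^bsub>G\<^esub> g = x \<otimes>\<^bsub>G\<^esub> g) \<longleftrightarrow> (y \<otimes>\<^bsub>H\<^esub> fg = z)"
    by (rule me_D[OF me e1 e2 e3])
  have 2: "(g \<otimes>\<^bsub>G\<^esub> x = x \<otimes>\<^bsub>G\<^esub> g) \<longleftrightarrow> (fg \<otimes>\<^bsub>H\<^esub> y = z)"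
    by (rule me_D[OF me e2 e1 e3])
  have 3: "y \<otimes>\<^bsub>H\<^esub> fg = z" using 1 by simp
  show False
  proof (cases "x \<otimes>\<^bsub>G\<^esub> g = g \<otimes>\<^bsub>G\<^esub> x")
    case True
    then have "fg \<otimes>\<^bsub>H\<^esub> y = z" using 2 by simp
    then have "y \<otimes>\<^bsub>H\<^esub> fg = fg \<otimes>\<^bsub>H\<^esub> y" using 3 by simp
    then show False using True assms(1,2,6) unfolding centralizer_def by simp
  next
    case False
    then have "fg \<otimes>\<^bsub>H\<^esub> y \<noteq> z" using 2 by auto
    then have "y \<otimes>\<^bsub>H\<^esub> fg \<noteq> fg \<otimes>\<^bsub>H\<^esub> y" using 3 by simp
    then show False using False assms(1,2,6) unfolding centralizer_def by simp
  qed
qed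

theorem lemma4p13:
  fixes G :: "('a, 'm) monoid_scheme" and H :: "('b, 'n) monoid_scheme"
    and c :: "('a, 'b) config" and f :: "'a \<Rightarrow> 'b"
  assumes "group G" and "group H"
    and "finite (carrier G)" and "finite (carrier H)"
    and "3 \<le> k" and "i < k"
    and "\<forall>j. c j \<noteq> None \<longrightarrow> j < k"
    and "\<forall>j g h. c j = Some (g, h) \<longrightarrow> g \<in> carrier G \<and> h \<in> carrier H"
    and "bij_betw f (carrier G) (carrier H)"
    and "x \<in> carrier G"
    and "card (centralizer G x) \<noteq> card (centralizer H (f x))"
  shows "\<exists>g\<in>carrier G. spoiler_wins G H k 2 (c(i := Some (g, f g)))"
proof -
  have "\<exists>j j'. j < k \<and> j' < k \<and> j \<noteq> i \<and> j' \<noteq> i \<and> j \<noteq> j'"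
  proof (cases "i = 0")
    case True then show ?thesis using assms(5) by (intro exI[of _ 1] exI[of _ 2]) simp
  next
    case False
    show ?thesis
    proof (cases "i = 1")
      case True then show ?thesis using assms(5) by (intro exI[of _ 0] exI[of _ 2]) simp
    next
      case False2: False
      then show ?thesis using assms(5) False by (intro exI[of _ 0] exI[of _ 1]) simp
    qed
  qed
  then obtain j j' where jj: "j < k" "j' < k" "j \<noteq> i" "j' \<noteq> i" "j \<noteq> j'" by blast
  have "spoiler_wins G H k (Suc (Suc 0)) (c(i := Some (x, f x)))"
  proof -
    have "\<forall>f'. bij_betw f' (carrier G) (carrier H) \<longrightarrow>
           (\<exists>g\<in>carrier G. spoiler_wins G H k (Suc 0) (c(i := Some (x, f x), j := Some (g, f' g))))"
    proof (intro allI impI)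
      fix f' assume bf': "bij_betw f' (carrier G) (carrier H)"
      obtain g where g: "g \<in> carrier G"
        "\<not> (g \<in> centralizer G x \<longleftrightarrow> f' g \<in> centralizer H (f x))"
        using card_cent_eq[OF bf'] assms(11) by blast
      have "spoiler_wins G H k (Suc 0) (c(i := Some (x, f x), j := Some (g, f' g)))"
      proof -
        have "\<forall>f''. bij_betw f'' (carrier G) (carrier H) \<longrightarrow>
           (\<exists>g'\<in>carrier G. spoiler_wins G H k 0
              (c(i := Some (x, f x), j := Some (g, f' g), j' := Some (g', f'' g'))))"
        proof (intro allI impI)
          fix f'' assume "bij_betw f'' (carrier G) (carrier H)"
          have xg: "x \<otimes>\<^bsub>G\<^esub> g \<in> carrier G"
            using assms(1,10) g(1) by (simp add: group.is_monoid monoid.m_closed)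
          have fg: "f' g \<in> carrier H" using bf' g(1) by (auto simp: bij_betw_def)
          show "\<exists>g'\<in>carrier G. spoiler_wins G H k 0
              (c(i := Some (x, f x), j := Some (g, f' g), j' := Some (g', f'' g')))"
          proof (rule bexI[OF _ xg])
            show "spoiler_wins G H k 0
              (c(i := Some (x, f x), j := Some (g, f' g), j' := Some (x \<otimes>\<^bsub>G\<^esub> g, f'' (x \<otimes>\<^bsub>G\<^esub> g))))"
              unfolding spoiler_wins.simps
              by (rule not_me[OF g(1) _ _ _ _ g(2)]) (use jj fg in auto)
          qed
        qed
        then show ?thesis unfolding spoiler_wins.simps using jj(2) by blast
      qed
      then show "\<exists>g\<in>carrier G. spoiler_wins G H k (Suc 0) (c(i := Some (x, f x), j := Some (g, f' g)))"
        using g(1) by blast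
    qed
    then show ?thesis unfolding spoiler_wins.simps(2)[of G H k "Suc 0"] using jj(1) by blast
  qed
  then show ?thesis using assms(10) unfolding numeral_2_eq_2 by blast
qed

end
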